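(* Let $n\ge1$, $\lambda>0$, $\alpha>0$, and $\mu_1,\dots,\mu_n,\mu^*_1,\dots,\mu^*_n\in\mathbb{R}$. Let $X_1,\dots,X_n$ be independent with $X_i\sim\mathrm{Fr\acute{e}}(\mu_i,\lambda,\alpha)$ and $X^*_1,\dots,X^*_n$ be independent with $X^*_i\sim\mathrm{Fr\acute{e}}(\mu^*_i,\lambda,\alpha)$. If $\sum_{i=j}^{n}\mu^*_{(i)}\le\sum_{i=j}^{n}\mu_{(i)}$ for all $j=1,\dots,n$, then $X_{n:n}\ge_{\rm rh}X^*_{n:n}$.
   Context: $X\sim \mathrm{Fr\acute{e}}(\mu,\lambda,\alpha)$ means $X$ has distribution function $\exp\{-((x-\mu)/\lambda)^{-\alpha}\}$ for $x>\mu$. $X_{n:n}=\max(X_1,\dots,X_n)$. For a vector $\boldsymbol{x}$, $x_{(1)}\le\dots\le x_{(n)}$ are its components in increasing order. For random variables $X,Y$ with distribution functions $F,G$ and densities, $X\le_{\rm rh}Y$ means $F'(x)/F(x)\le G'(x)/G(x)$ for all $x$ (reversed hazard rate order). *)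

theory Defs
  imports "HOL-Probability.Probability"
begin

definition frechet_cdf :: "real \<Rightarrow> real \<Rightarrow> real \<Rightarrow> real \<Rightarrow> real" where
  "frechet_cdf mu lam alpha x =
     (if x > mu then exp (- (((x - mu) / lam) powr (- alpha))) else 0)"

definition rh_le :: "(real \<Rightarrow> real) \<Rightarrow> (real \<Rightarrow> real) \<Rightarrow> bool" where
  "rh_le F G \<longleftrightarrow> (\<forall>x. 0 < F x \<and> 0 < G x \<longrightarrow> deriv F x / F x \<le> deriv G x / G x)"

text \<open>i-th smallest (0-based) of the values mu 0, ..., mu (n-1).\<close>
definition ord_stat :: "(nat \<Rightarrow> real) \<Rightarrow> nat \<Rightarrow> nat \<Rightarrow> real" where
  "ord_stat mu n i = sort (map mu [0..<n]) ! i"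

definition sample_max :: "(nat \<Rightarrow> 'a \<Rightarrow> real) \<Rightarrow> nat \<Rightarrow> 'a \<Rightarrow> real" where
  "sample_max X n \<omega> = Max ((\<lambda>i. X i \<omega>) ` {0..<n})"

end

theory Submission
  imports Defs
begin


lemma cdf_max:
  fixes M :: "'a measure" and Y :: "nat \<Rightarrow> 'a \<Rightarrow> real" and m :: "nat \<Rightarrow> real"
  assumes "prob_space M" "n \<ge> 1" "\<And>i. i < n \<Longrightarrow> Y i \<in> borel_measurable M"
    "prob_space.indep_vars M (\<lambda>_. borel) Y {0..<n}"
    "\<And>i. i < n \<Longrightarrow> cdf (distr M borel (Y i)) = frechet_cdf (m i) lam alpha"
  shows "cdf (distr M borel (sample_max Y n)) x = (\<Prod>i\<in>{0..<n}. frechet_cdf (m i) lam alpha x)"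
proof -
  interpret prob_space M by fact
  have eq: "sample_max Y n = (\<lambda>\<omega>. Max ((\<lambda>i. Y i \<omega>) ` {0..<n}))"
    by (rule ext) (simp add: sample_max_def)
  have meas: "sample_max Y n \<in> borel_measurable M"
    unfolding eq by (rule borel_measurable_Max) (auto simp: assms)
  have ne: "{0..<n} \<noteq> {}" using assms(2) by auto
  have seteq: "sample_max Y n -` {..x} \<inter> space M = (\<Inter>i\<in>{0..<n}. Y i -` {..x} \<inter> space M)"
    using ne by (auto simp: eq)
  have ind: "indep_sets (\<lambda>i. { Y i -` A \<inter> space M | A. A \<in> sets borel}) {0..<n}"
    using assms(4) unfolding indep_vars_def2 by blast
  have "cdf (distr M borel (sample_max Y n)) x = prob (sample_max Y n -` {..x} \<inter> space M)"
    by (simp add: cdf_def2 measure_distr[OF meas])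
  also have "\<dots> = prob (\<Inter>i\<in>{0..<n}. Y i -` {..x} \<inter> space M)"
    by (simp only: seteq)
  also have "\<dots> = (\<Prod>i\<in>{0..<n}. prob (Y i -` {..x} \<inter> space M))"
  proof (rule indep_setsD[OF ind])
    show "\<forall>j\<in>{0..<n}. Y j -` {..x} \<inter> space M \<in> {Y j -` A \<inter> space M |A. A \<in> sets borel}"
      by (intro ballI CollectI exI[of _ "{..x}"]) simp
  qed (use ne in auto)
  also have "\<dots> = (\<Prod>i\<in>{0..<n}. frechet_cdf (m i) lam alpha x)"
  proof (rule prod.cong[OF refl])
    fix i assume "i \<in> {0..<n}"
    hence i: "i < n" by simp
    have "prob (Y i -` {..x} \<inter> space M) = cdf (distr M borel (Y i)) x"
      by (simp add: cdf_def2 measure_distr[OF assms(3)[OF i]])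
    thus "prob (Y i -` {..x} \<inter> space M) = frechet_cdf (m i) lam alpha x"
      using assms(5)[OF i] by simp
  qed
  finally show ?thesis .
qed


lemma rh_prod:
  fixes m :: "nat \<Rightarrow> real"
  assumes "n \<ge> 1" "lam > 0" "alpha > 0"
    and pos: "(\<Prod>i\<in>{0..<n}. frechet_cdf (m i) lam alpha x) > 0"
  shows "(\<forall>i<n. m i < x) \<and>
    deriv (\<lambda>y. \<Prod>i\<in>{0..<n}. frechet_cdf (m i) lam alpha y) x / (\<Prod>i\<in>{0..<n}. frechet_cdf (m i) lam alpha x)
     = (\<Sum>i\<in>{0..<n}. alpha / lam * ((x - m i) / lam) powr (- alpha - 1))"
proof -
  let ?G = "\<lambda>y. \<Prod>i\<in>{0..<n}. frechet_cdf (m i) lam alpha y"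
  define H where "H = (\<lambda>y. exp (- (\<Sum>i\<in>{0..<n}. ((y - m i) / lam) powr (- alpha))))"
  have mx: "m i < x" if "i < n" for i
  proof (rule ccontr)
    assume "\<not> m i < x"
    hence "frechet_cdf (m i) lam alpha x = 0" by (simp add: frechet_cdf_def)
    hence "?G x = 0" using that by (intro prod_zero) auto
    with pos show False by simp
  qed
  define c where "c = Max (m ` {0..<n})"
  have ne: "{0..<n} \<noteq> {}" using assms(1) by auto
  have xc: "x \<in> {c<..}" using mx ne by (simp add: c_def)
  have GH: "?G y = H y" if "y \<in> {c<..}" for y
  proof -
    have yi: "m i < y" if "i \<in> {0..<n}" for i using \<open>y \<in> {c<..}\<close> that ne by (simp add: c_def)
    have "?G y = (\<Prod>i\<in>{0..<n}. exp (- (((y - m i) / lam) powr (- alpha))))"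
      by (rule prod.cong[OF refl]) (simp add: frechet_cdf_def yi)
    also have "\<dots> = exp (\<Sum>i\<in>{0..<n}. - (((y - m i) / lam) powr (- alpha)))"
      by (simp add: exp_sum)
    finally show ?thesis by (simp add: H_def sum_negf)
  qed
  have d1: "((\<lambda>y. ((y - m i) / lam) powr (- alpha)) has_real_derivative
      - (alpha / lam * ((x - m i) / lam) powr (- alpha - 1))) (at x)" if "i \<in> {0..<n}" for i
  proof -
    have "0 < (x - m i) / lam" using mx[of i] that assms(2) by simp
    have e: "((\<lambda>y. (y - m i) / lam) has_real_derivative 1 / lam) (at x)"
      using assms(2) by (auto intro!: derivative_eq_intros)
    have "((\<lambda>y. ((y - m i) / lam) powr (- alpha)) has_real_derivative
      (- alpha) * ((x - m i) / lam) powr (- alpha - 1) * (1 / lam)) (at x)"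
      using DERIV_chain2[OF has_real_derivative_powr[OF \<open>0 < (x - m i) / lam\<close>, of "- alpha"] e] by (simp add: diff_minus_eq_add)
    thus ?thesis by simp
  qed
  have d2: "((\<lambda>y. \<Sum>i\<in>{0..<n}. ((y - m i) / lam) powr (- alpha)) has_real_derivative
      (\<Sum>i\<in>{0..<n}. - (alpha / lam * ((x - m i) / lam) powr (- alpha - 1)))) (at x)"
    by (rule DERIV_sum) (rule d1)
  have dH: "(H has_real_derivative H x * (\<Sum>i\<in>{0..<n}. alpha / lam * ((x - m i) / lam) powr (- alpha - 1))) (at x)"
    unfolding H_def using d2 mx assms(2) by (auto intro!: derivative_eq_intros simp: sum_negf)
  have dG: "(?G has_real_derivative H x * (\<Sum>i\<in>{0..<n}. alpha / lam * ((x - m i) / lam) powr (- alpha - 1))) (at x)"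
    by (rule has_field_derivative_transform_within_open[OF dH _ xc]) (auto simp: GH)
  have "deriv ?G x = H x * (\<Sum>i\<in>{0..<n}. alpha / lam * ((x - m i) / lam) powr (- alpha - 1))"
    by (rule DERIV_imp_deriv[OF dG])
  moreover have "?G x = H x" using GH xc by blast
  moreover have "H x > 0" by (simp add: H_def)
  ultimately show ?thesis using mx by simp
qed


lemma abel_nonneg:
  fixes d D :: "nat \<Rightarrow> real"
  assumes mono: "\<And>i. Suc i < n \<Longrightarrow> d i \<le> d (Suc i)"
    and dpos: "\<And>i. i < n \<Longrightarrow> 0 \<le> d i"
    and T: "\<And>j. j < n \<Longrightarrow> 0 \<le> (\<Sum>i=j..<n. D i)"
  shows "0 \<le> (\<Sum>i=0..<n. d i * D i)"
proof (cases "n = 0")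
  case True thus ?thesis by simp
next
  case False
  have P: "j < n \<longrightarrow> d j * (\<Sum>i=j..<n. D i) \<le> (\<Sum>i=j..<n. d i * D i)" if "j \<le> n" for j
    using that
  proof (induction j rule: inc_induct)
    case base thus ?case by simp
  next
    case (step k)
    have s1: "(\<Sum>i=k..<n. D i) = D k + (\<Sum>i=Suc k..<n. D i)"
      using step.hyps by (simp add: sum.atLeast_Suc_lessThan)
    have s2: "(\<Sum>i=k..<n. d i * D i) = d k * D k + (\<Sum>i=Suc k..<n. d i * D i)"
      using step.hyps by (simp add: sum.atLeast_Suc_lessThan)
    have "d k * (\<Sum>i=Suc k..<n. D i) \<le> (\<Sum>i=Suc k..<n. d i * D i)"
    proof (cases "Suc k < n")
      case True
      have "d k * (\<Sum>i=Suc k..<n. D i) \<le> d (Suc k) * (\<Sum>i=Suc k..<n. D i)"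
        by (rule mult_right_mono[OF mono[OF True] T[OF True]])
      also have "\<dots> \<le> (\<Sum>i=Suc k..<n. d i * D i)" using step.IH True by simp
      finally show ?thesis .
    next
      case False
      hence "Suc k = n" using step.hyps by simp
      thus ?thesis by simp
    qed
    thus ?case using s1 s2 by (simp add: distrib_left)
  qed
  have "0 \<le> d 0 * (\<Sum>i=0..<n. D i)" using False dpos T by simp
  also have "\<dots> \<le> (\<Sum>i=0..<n. d i * D i)" using P[of 0] False by simp
  finally show ?thesis .
qed

lemma phi_deriv:
  fixes lam alpha x :: real
  assumes "lam > 0" "m < x"
  shows "((\<lambda>m. ((x - m) / lam) powr (- alpha - 1)) has_real_derivative
     (alpha + 1) / lam * ((x - m) / lam) powr (- alpha - 2)) (at m)"
proof -
  have p: "0 < (x - m) / lam" using assms by simp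
  have e: "((\<lambda>y. (x - y) / lam) has_real_derivative - 1 / lam) (at m)"
    using assms(1) by (auto intro!: derivative_eq_intros)
  have "((\<lambda>y. ((x - y) / lam) powr (- alpha - 1)) has_real_derivative
      (- alpha - 1) * ((x - m) / lam) powr (- alpha - 1 - 1) * (- 1 / lam)) (at m)"
    using DERIV_chain2[OF has_real_derivative_powr[OF p, of "- alpha - 1"] e] by simp
  moreover have "- alpha - 1 - 1 = - alpha - (2::real)" by simp
  moreover have "(- alpha - 1) * P * (- 1 / lam) = (alpha + 1) / lam * P" for P
    by (simp add: divide_simps; simp add: algebra_simps)
  ultimately show ?thesis by simp
qed

lemma dphi_mono:
  fixes lam alpha x :: real
  assumes "lam > 0" "alpha > 0" "m1 \<le> m2" "m2 < x"
  shows "(alpha + 1) / lam * ((x - m1) / lam) powr (- alpha - 2)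
     \<le> (alpha + 1) / lam * ((x - m2) / lam) powr (- alpha - 2)"
proof -
  have "((x - m1) / lam) powr (- alpha - 2) \<le> ((x - m2) / lam) powr (- alpha - 2)"
    using assms by (intro powr_mono2') (auto simp: divide_right_mono)
  thus ?thesis using assms by (intro mult_left_mono) auto
qed

lemma phi_tangent:
  fixes lam alpha x :: real
  assumes "lam > 0" "alpha > 0" "a < x" "b < x"
  shows "(alpha + 1) / lam * ((x - b) / lam) powr (- alpha - 2) * (a - b)
     \<le> ((x - a) / lam) powr (- alpha - 1) - ((x - b) / lam) powr (- alpha - 1)"
proof -
  have cv: "convex_on {..<x} (\<lambda>m. ((x - m) / lam) powr (- alpha - 1))"
  proof (rule convex_on_realI[where f'="\<lambda>m. (alpha + 1) / lam * ((x - m) / lam) powr (- alpha - 2)"])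
    show "connected {..<x}" by simp
  next
    fix y assume "y \<in> {..<x}"
    thus "((\<lambda>m. ((x - m) / lam) powr (- alpha - 1)) has_real_derivative
      (alpha + 1) / lam * ((x - y) / lam) powr (- alpha - 2)) (at y)"
      using assms by (intro phi_deriv) auto
  next
    fix y z assume "y \<in> {..<x}" "z \<in> {..<x}" "y \<le> z"
    thus "(alpha + 1) / lam * ((x - y) / lam) powr (- alpha - 2)
       \<le> (alpha + 1) / lam * ((x - z) / lam) powr (- alpha - 2)"
      using assms by (intro dphi_mono) auto
  qed
  show ?thesis
  proof (rule convex_on_imp_above_tangent[OF cv])
    show "connected {..<x}" by simp
    show "b \<in> interior {..<x}" using assms(4) by (simp add: interior_open)
    show "a \<in> {..<x}" using assms(3) by simp
    show "((\<lambda>m. ((x - m) / lam) powr (- alpha - 1)) has_real_derivative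
      (alpha + 1) / lam * ((x - b) / lam) powr (- alpha - 2)) (at b within {..<x})"
      by (rule has_field_derivative_at_within[OF phi_deriv]) (use assms in auto)
  qed
qed

lemma sum_ord_stat:
  fixes f :: "real \<Rightarrow> real"
  shows "(\<Sum>i=0..<n. f (ord_stat m n i)) = (\<Sum>i=0..<n. f (m i))"
proof -
  let ?xs = "map m [0..<n]"
  have "(\<Sum>i=0..<n. f (ord_stat m n i)) = sum_list (map f (sort ?xs))"
    by (simp add: ord_stat_def sum_list_sum_nth atLeast0LessThan)
  also have "\<dots> = sum_list (map f ?xs)"
    by (metis mset_map mset_sort sum_mset_sum_list)
  also have "\<dots> = (\<Sum>i=0..<n. f (m i))"
    by (simp add: sum_list_sum_nth atLeast0LessThan)
  finally show ?thesis .
qed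

lemma ord_stat_props:
  assumes "i < n"
  shows "ord_stat m n i \<in> m ` {0..<n}"
    and "\<And>j. i \<le> j \<Longrightarrow> j < n \<Longrightarrow> ord_stat m n i \<le> ord_stat m n j"
proof -
  show "ord_stat m n i \<in> m ` {0..<n}"
    using assms unfolding ord_stat_def
    by (metis length_map length_sort diff_zero length_upt nth_mem set_map set_sort set_upt)
  show "\<And>j. i \<le> j \<Longrightarrow> j < n \<Longrightarrow> ord_stat m n i \<le> ord_stat m n j"
    unfolding ord_stat_def by (rule sorted_nth_mono) auto
qed


lemma major_ineq:
  fixes mu mus :: "nat \<Rightarrow> real" and lam alpha x :: real
  assumes "lam > 0" "alpha > 0"
    and mux: "\<And>i. i < n \<Longrightarrow> mu i < x" and musx: "\<And>i. i < n \<Longrightarrow> mus i < x"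
    and hyp: "\<And>j. j < n \<Longrightarrow> (\<Sum>i=j..<n. ord_stat mus n i) \<le> (\<Sum>i=j..<n. ord_stat mu n i)"
  shows "(\<Sum>i=0..<n. ((x - mus i) / lam) powr (- alpha - 1)) \<le> (\<Sum>i=0..<n. ((x - mu i) / lam) powr (- alpha - 1))"
proof -
  define a where "a = ord_stat mu n"
  define b where "b = ord_stat mus n"
  define dp where "dp = (\<lambda>m. (alpha + 1) / lam * ((x - m) / lam) powr (- alpha - 2))"
  have ax: "a i < x" if "i < n" for i
    using ord_stat_props(1)[OF that, of mu] mux unfolding a_def by auto
  have bx: "b i < x" if "i < n" for i
    using ord_stat_props(1)[OF that, of mus] musx unfolding b_def by auto
  have "0 \<le> (\<Sum>i=0..<n. dp (b i) * (a i - b i))"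
  proof (rule abel_nonneg)
    fix i assume i: "Suc i < n"
    have "b i \<le> b (Suc i)" unfolding b_def using i by (intro ord_stat_props(2)) auto
    thus "dp (b i) \<le> dp (b (Suc i))" unfolding dp_def
      using assms bx[OF i] by (intro dphi_mono) auto
  next
    fix i assume "i < n"
    show "0 \<le> dp (b i)" unfolding dp_def using assms by simp
  next
    fix j assume j: "j < n"
    show "0 \<le> (\<Sum>i=j..<n. a i - b i)"
      using hyp[OF j] unfolding a_def b_def by (simp add: sum_subtractf)
  qed
  also have "\<dots> \<le> (\<Sum>i=0..<n. ((x - a i) / lam) powr (- alpha - 1) - ((x - b i) / lam) powr (- alpha - 1))"
  proof (rule sum_mono)
    fix i assume "i \<in> {0..<n}"
    hence i: "i < n" by simp
    show "dp (b i) * (a i - b i) \<le> ((x - a i) / lam) powr (- alpha - 1) - ((x - b i) / lam) powr (- alpha - 1)"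
      unfolding dp_def using phi_tangent[OF assms(1,2) ax[OF i] bx[OF i]] .
  qed
  also have "\<dots> = (\<Sum>i=0..<n. ((x - mu i) / lam) powr (- alpha - 1)) - (\<Sum>i=0..<n. ((x - mus i) / lam) powr (- alpha - 1))"
    unfolding sum_subtractf a_def b_def
    using sum_ord_stat[of "\<lambda>m. ((x - m) / lam) powr (- alpha - 1)"] by simp
  finally show ?thesis by simp
qed

theorem mainTheorem2:
  fixes M :: "'a measure" and X Xs :: "nat \<Rightarrow> 'a \<Rightarrow> real"
    and mu mus :: "nat \<Rightarrow> real" and lam alpha :: real and n :: nat
  assumes "prob_space M"
    and "n \<ge> 1" and "lam > 0" and "alpha > 0"
    and "\<And>i. i < n \<Longrightarrow> X i \<in> borel_measurable M"
    and "\<And>i. i < n \<Longrightarrow> Xs i \<in> borel_measurable M"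
    and "prob_space.indep_vars M (\<lambda>_. borel) X {0..<n}"
    and "prob_space.indep_vars M (\<lambda>_. borel) Xs {0..<n}"
    and "\<And>i. i < n \<Longrightarrow> cdf (distr M borel (X i)) = frechet_cdf (mu i) lam alpha"
    and "\<And>i. i < n \<Longrightarrow> cdf (distr M borel (Xs i)) = frechet_cdf (mus i) lam alpha"
    and "\<And>j. j < n \<Longrightarrow> (\<Sum>i=j..<n. ord_stat mus n i) \<le> (\<Sum>i=j..<n. ord_stat mu n i)"
  shows "rh_le (cdf (distr M borel (sample_max Xs n))) (cdf (distr M borel (sample_max X n)))"
proof -
  have FX: "cdf (distr M borel (sample_max X n)) = (\<lambda>y. \<Prod>i\<in>{0..<n}. frechet_cdf (mu i) lam alpha y)"
    by (rule ext, rule cdf_max[OF assms(1,2,5,7,9)])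
  have FXs: "cdf (distr M borel (sample_max Xs n)) = (\<lambda>y. \<Prod>i\<in>{0..<n}. frechet_cdf (mus i) lam alpha y)"
    by (rule ext, rule cdf_max[OF assms(1,2,6,8,10)])
  show ?thesis
    unfolding rh_le_def FX FXs
  proof (intro allI impI, elim conjE)
    fix x
    assume ps: "0 < (\<Prod>i\<in>{0..<n}. frechet_cdf (mus i) lam alpha x)"
      and p: "0 < (\<Prod>i\<in>{0..<n}. frechet_cdf (mu i) lam alpha x)"
    note rs = rh_prod[OF assms(2,3,4) ps] and r = rh_prod[OF assms(2,3,4) p]
    have "(\<Sum>i=0..<n. ((x - mus i) / lam) powr (- alpha - 1)) \<le> (\<Sum>i=0..<n. ((x - mu i) / lam) powr (- alpha - 1))"
      using rs r by (intro major_ineq[OF assms(3,4) _ _ assms(11)]) auto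
    hence "alpha / lam * (\<Sum>i=0..<n. ((x - mus i) / lam) powr (- alpha - 1)) \<le> alpha / lam * (\<Sum>i=0..<n. ((x - mu i) / lam) powr (- alpha - 1))"
      using assms(3,4) by (intro mult_left_mono) auto
    thus "deriv (\<lambda>y. \<Prod>i\<in>{0..<n}. frechet_cdf (mus i) lam alpha y) x / (\<Prod>i\<in>{0..<n}. frechet_cdf (mus i) lam alpha x)
       \<le> deriv (\<lambda>y. \<Prod>i\<in>{0..<n}. frechet_cdf (mu i) lam alpha y) x / (\<Prod>i\<in>{0..<n}. frechet_cdf (mu i) lam alpha x)"
      using rs r by (simp add: sum_distrib_left)
  qed
qed

end
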